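(* Let $(q_k)_{k\ge1}$ be a sequence of integers with $q_k \ge 2$ for every $k \in \mathbb{N}$ and $\liminf_{k\to\infty} q_k/k > 3$. Then there exists a constant $C$ such that the following holds. For every $n \in \mathbb{N}$ and every collection $\mathcal{A}$ of hyperplanes in $Q := [q_1]\times\cdots\times[q_n]$ whose union is $Q$, either two distinct hyperplanes of $\mathcal{A}$ are parallel, or there exists $A \in \mathcal{A}$ with $F(A) \subseteq [C]$.
   Context: $[m] = \{1,\dots,m\}$. For finite sets $S_1,\dots,S_n$, a hyperplane in $Q = S_1\times\cdots\times S_n$ is a set $A = A_1\times\cdots\times A_n$ where each $A_k$ is either $S_k$ or a singleton subset of $S_k$. Its set of fixed coordinates is $F(A) = \{k : A_k \text{ is a singleton}\}$. Two hyperplanes $A, A'$ are parallel if $F(A) = F(A')$. *)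

theory Defs
  imports Main "HOL-Library.Extended_Real" "HOL-Library.FuncSet"
begin

definition grid :: "(nat \<Rightarrow> nat) \<Rightarrow> nat \<Rightarrow> (nat \<Rightarrow> nat) set" where
  "grid q n = PiE {1..n} (\<lambda>k. {1..q k})"

definition is_hyperplane :: "(nat \<Rightarrow> nat) \<Rightarrow> nat \<Rightarrow> (nat \<Rightarrow> nat set) \<Rightarrow> bool" where
  "is_hyperplane q n A \<longleftrightarrow>
     (\<forall>k\<in>{1..n}. A k = {1..q k} \<or> (\<exists>a\<in>{1..q k}. A k = {a})) \<and>
     (\<forall>k. k \<notin> {1..n} \<longrightarrow> A k = {})"

definition hyp_set :: "nat \<Rightarrow> (nat \<Rightarrow> nat set) \<Rightarrow> (nat \<Rightarrow> nat) set" where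
  "hyp_set n A = PiE {1..n} A"

definition fixed_coords :: "nat \<Rightarrow> (nat \<Rightarrow> nat set) \<Rightarrow> nat set" where
  "fixed_coords n A = {k \<in> {1..n}. \<exists>a. A k = {a}}"

definition parallel :: "nat \<Rightarrow> (nat \<Rightarrow> nat set) \<Rightarrow> (nat \<Rightarrow> nat set) \<Rightarrow> bool" where
  "parallel n A A' \<longleftrightarrow> fixed_coords n A = fixed_coords n A'"

end

theory Submission
  imports Defs
begin

lemma tail_small:
  fixes a :: "nat \<Rightarrow> real"
  assumes nn: "\<And>j. 0 \<le> a j" and s: "summable a"
  shows "\<exists>C. \<forall>n. (\<Sum>j\<in>{C<..n}. a j) < 1"
proof -
  obtain N where N: "\<forall>m\<ge>N. norm (\<Sum>i. a (i + m)) < 1"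
    using suminf_exist_split[of 1 a] s by auto
  have sN: "summable (\<lambda>i. a (i + N))" using s summable_ignore_initial_segment by blast
  have "(\<Sum>j\<in>{N<..n}. a j) < 1" for n
  proof -
    have "(\<Sum>j\<in>{N<..n}. a j) \<le> (\<Sum>j\<in>{N..<Suc n}. a j)"
      by (rule sum_mono2) (auto simp: nn)
    also have "\<dots> = (\<Sum>i\<in>{0..<Suc n - N}. a (N + i))"
      using sum.atLeastLessThan_shift_0[of a N "Suc n"] by (simp add: comp_def)
    also have "\<dots> = (\<Sum>i<Suc n - N. a (i + N))"
      by (simp add: atLeast0LessThan add.commute)
    also have "\<dots> \<le> (\<Sum>i. a (i + N))"
      by (rule sum_le_suminf[OF sN]) (auto simp: nn)
    also have "\<dots> < 1" using N by auto
    finally show ?thesis .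
  qed
  then show ?thesis by blast
qed

lemma tele_help: "((x::real) - y) / d + (y - z) / d = (x - z) / d"
  by (simp add: diff_divide_distrib)

lemma telescope:
  fixes P :: "nat \<Rightarrow> real"
  assumes K: "K \<ge> 1" and t: "t < 1" and Pnn: "\<And>j. 0 \<le> P j"
    and step: "\<And>j. j \<ge> K \<Longrightarrow> P (Suc j) \<le> P j * (1 + t / j)"
  shows "N \<ge> K \<Longrightarrow> (\<Sum>j\<in>{K..<N}. P j / (real j * (real j + 1))) \<le> (P K / K - P N / N) / (1 - t)"
proof (induction N)
  case 0 then show ?case using K by simp
next
  case (Suc N)
  show ?case
  proof (cases "N \<ge> K")
    case False
    then have "Suc N = K" using Suc by simp
    then show ?thesis by simp
  next
    case True
    have jpos: "real N > 0" using True K by simp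
    have key: "P N / (real N * (real N + 1)) \<le> (P N / N - P (Suc N) / (Suc N)) / (1 - t)"
    proof -
      have "P (Suc N) / Suc N \<le> P N * (1 + t / N) / Suc N"
        using step[OF True] by (simp add: divide_right_mono)
      also have "\<dots> = P N * (N + t) / (real N * (real N + 1))"
        using jpos by (simp add: field_simps)
      finally have h: "P (Suc N) / Suc N \<le> P N * (N + t) / (real N * (real N + 1))" .
      have "P N / N - P N * (N + t) / (real N * (real N + 1)) = (P N * (N + 1) - P N * (N + t)) / (real N * (real N + 1))"
      proof -
        have ne: "real N + 1 \<noteq> 0" by linarith
        have e1: "P N / N = P N * (N + 1) / (real N * (real N + 1))"
          by (simp only: of_nat_mult of_nat_add of_nat_1 nonzero_mult_divide_mult_cancel_right[OF ne])
        show ?thesis by (subst e1) (simp only: diff_divide_distrib)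
      qed
      also have "\<dots> = (1 - t) * (P N / (real N * (real N + 1)))"
        by (simp add: algebra_simps)
      finally have eq: "P N / N - P N * (N + t) / (real N * (real N + 1)) = (1 - t) * (P N / (real N * (real N + 1)))" .
      from h have "P N / N - P N * (N + t) / (real N * (real N + 1)) \<le> P N / N - P (Suc N) / (Suc N)"
        by (rule diff_left_mono)
      then have "(1 - t) * (P N / (real N * (real N + 1))) \<le> P N / N - P (Suc N) / (Suc N)"
        by (simp only: eq)
      moreover have "0 < 1 - t" using t by simp
      ultimately show ?thesis by (simp only: pos_le_divide_eq mult.commute)
    qed
    have "(\<Sum>j\<in>{K..<Suc N}. P j / (real j * (real j + 1))) = (\<Sum>j\<in>{K..<N}. P j / (real j * (real j + 1))) + P N / (real N * (real N + 1))"
      using True by simp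
    also have "\<dots> \<le> (P K / K - P N / N) / (1 - t) + (P N / N - P (Suc N) / (Suc N)) / (1 - t)"
      by (rule add_mono[OF Suc.IH[OF True] key])
    also have "\<dots> = (P K / K - P (Suc N) / (Suc N)) / (1 - t)"
      by (rule tele_help)
    finally show ?thesis .
  qed
qed


lemma div_help: "(p::real) / (A * B / 2) = (2 / A) * (p / B)"
  by (simp add: divide_divide_eq_right mult.commute mult.left_commute)

lemma summable_a:
  fixes q :: "nat \<Rightarrow> nat" and c \<delta> t :: real
  assumes K0: "K0 \<ge> 1" and c: "c > 0" and d0: "0 < \<delta>" and d1: "\<delta> < 1" and t: "t < 1"
    and qc: "\<And>j. j \<ge> K0 \<Longrightarrow> real (q j) \<ge> c * real j"
    and rt: "\<And>j. j \<ge> K0 \<Longrightarrow> 3 * (1 / ((1 - \<delta>) * real (q j))) \<le> t / real j"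
  shows "summable (\<lambda>j. (\<Prod>i\<in>{1..<j}. 1 + 3 * (1 / ((1 - \<delta>) * real (q i)))) / (\<delta> * real (q j))^2)"
proof -
  define r where "r i = 3 * (1 / ((1 - \<delta>) * real (q i)))" for i
  define P where "P j = (\<Prod>i\<in>{1..<j}. 1 + r i)" for j
  define a where "a j = P j / (\<delta> * real (q j))^2" for j
  have rn: "\<And>i. 0 \<le> r i" unfolding r_def using d1 by simp
  have Pn: "\<And>j. 0 \<le> P j" unfolding P_def using rn by (simp add: prod_nonneg add_nonneg_nonneg)
  have an: "\<And>j. 0 \<le> a j" unfolding a_def using Pn by simp
  have Pstep: "P (Suc j) \<le> P j * (1 + t / j)" if j: "j \<ge> K0" for j
  proof -
    have "{1..<Suc j} = insert j {1..<j}" using j K0 by auto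
    then have "P (Suc j) = (1 + r j) * P j" unfolding P_def by simp
    also have "\<dots> \<le> (1 + t / j) * P j"
      using rt[OF j] Pn[of j] unfolding r_def by (intro mult_right_mono) auto
    finally show ?thesis by (simp add: mult.commute)
  qed
  define E where "E = 2 / (\<delta> * c)^2"
  have aE: "a j \<le> E * (P j / (real j * (real j + 1)))" if j: "j \<ge> K0" for j
  proof -
    have j1: "real j \<ge> 1" using j K0 by simp
    have "0 < \<delta> * c * real j" using d0 c j1 by simp
    moreover have "\<delta> * c * real j \<le> \<delta> * real (q j)" using qc[OF j] d0 by simp
    ultimately have "(\<delta> * c * real j)^2 \<le> (\<delta> * real (q j))^2" by (intro power_mono) auto
    moreover have "(\<delta> * c)^2 * (real j * (real j + 1)) / 2 \<le> (\<delta> * c * real j)^2"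
    proof -
      have "real j * (real j + 1) \<le> 2 * real j ^ 2" using j1 by (simp add: power2_eq_square algebra_simps)
      then have "(\<delta> * c)^2 * (real j * (real j + 1)) \<le> (\<delta> * c)^2 * (2 * real j ^ 2)"
        by (intro mult_left_mono) auto
      then show ?thesis by (simp add: power_mult_distrib)
    qed
    ultimately have den: "(\<delta> * c)^2 * (real j * (real j + 1)) / 2 \<le> (\<delta> * real (q j))^2" by linarith
    have dpos: "0 < (\<delta> * c)^2 * (real j * (real j + 1)) / 2" using d0 c j1 by simp
    have "a j = P j / (\<delta> * real (q j))^2" unfolding a_def ..
    also have "\<dots> \<le> P j / ((\<delta> * c)^2 * (real j * (real j + 1)) / 2)"
    proof -
      have qq: "0 < (\<delta> * real (q j))^2" using den dpos by linarith
      show ?thesis by (rule divide_left_mono[OF den Pn[of j]]) (rule mult_pos_pos[OF qq dpos])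
    qed
    also have "\<dots> = E * (P j / (real j * (real j + 1)))"
      unfolding E_def by (rule div_help)
    finally show ?thesis .
  qed
  define M where "M = (\<Sum>i<K0. a i) + E * (P K0 / K0 / (1 - t))"
  have "(\<Sum>i<n. a i) \<le> M" for n
  proof -
    let ?m = "max n K0"
    have f1: "(\<Sum>i<n. a i) \<le> (\<Sum>i<?m. a i)"
      by (rule sum_mono2) (auto simp: an)
    have f2: "(\<Sum>i<?m. a i) = (\<Sum>i<K0. a i) + (\<Sum>i\<in>{K0..<?m}. a i)"
      using sum.atLeastLessThan_concat[of 0 K0 ?m a] by (simp add: atLeast0LessThan)
    have f3: "(\<Sum>i\<in>{K0..<?m}. a i) \<le> (\<Sum>i\<in>{K0..<?m}. E * (P i / (real i * (real i + 1))))"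
      by (intro sum_mono aE) auto
    have f4: "(\<Sum>i\<in>{K0..<?m}. E * (P i / (real i * (real i + 1)))) = E * (\<Sum>i\<in>{K0..<?m}. P i / (real i * (real i + 1)))"
      by (simp add: sum_distrib_left)
    have f5: "(\<Sum>i\<in>{K0..<?m}. P i / (real i * (real i + 1))) \<le> (P K0 / K0 - P ?m / ?m) / (1 - t)"
      by (rule telescope[OF K0 t Pn Pstep]) auto
    have f6: "(P K0 / K0 - P ?m / ?m) / (1 - t) \<le> P K0 / K0 / (1 - t)"
      using t Pn by (intro divide_right_mono) auto
    have E0: "0 \<le> E" unfolding E_def by simp
    have f7: "E * (\<Sum>i\<in>{K0..<?m}. P i / (real i * (real i + 1))) \<le> E * (P K0 / K0 / (1 - t))"
      using f5 f6 E0 by (intro mult_left_mono) auto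
    show ?thesis unfolding M_def using f1 f2 f3 f4 f7 by linarith
  qed
  then have "summable a" by (intro summableI_nonneg_bounded[OF an])
  then show ?thesis unfolding a_def P_def r_def .
qed

lemma grid_Suc_eq: "grid q (Suc k) = (\<lambda>(a, g). g(Suc k := a)) ` ({1..q (Suc k)} \<times> grid q k)"
proof -
  have "{1..Suc k} = insert (Suc k) {1..k}" by auto
  then show ?thesis unfolding grid_def by (simp add: PiE_insert_eq)
qed

lemma sum_grid_Suc:
  "sum f (grid q (Suc k)) = (\<Sum>y\<in>grid q k. \<Sum>a\<in>{1..q (Suc k)}. f (y(Suc k := a)))"
proof -
  have inj: "inj_on (\<lambda>(a, g). g(Suc k := a)) ({1..q (Suc k)} \<times> grid q k)"
    unfolding grid_def by (rule inj_combinator) simp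
  have "sum f (grid q (Suc k)) = (\<Sum>(a, g)\<in>{1..q (Suc k)} \<times> grid q k. f (g(Suc k := a)))"
    unfolding grid_Suc_eq by (subst sum.reindex[OF inj]) (simp add: case_prod_unfold)
  also have "\<dots> = (\<Sum>a\<in>{1..q (Suc k)}. \<Sum>y\<in>grid q k. f (y(Suc k := a)))"
    by (rule sum.cartesian_product[symmetric])
  also have "\<dots> = (\<Sum>y\<in>grid q k. \<Sum>a\<in>{1..q (Suc k)}. f (y(Suc k := a)))"
    by (rule sum.swap)
  finally show ?thesis .
qed

lemma finite_grid: "finite (grid q k)"
  unfolding grid_def by (rule finite_PiE) auto

lemma grid_0: "grid q 0 = {\<lambda>_. undefined}"
  unfolding grid_def by simp

lemma sum_Pow_insert:
  assumes "finite I" "x \<notin> I"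
  shows "sum h (Pow (insert x I)) = sum h (Pow I) + (\<Sum>S\<in>Pow I. h (insert x S))"
proof -
  have inj: "inj_on (insert x) (Pow I)"
    unfolding inj_on_def using assms(2) by (metis PowD insert_ident subsetD)
  have d: "Pow I \<inter> insert x ` Pow I = {}" using assms(2) by auto
  have "sum h (Pow (insert x I)) = sum h (Pow I) + sum h (insert x ` Pow I)"
    unfolding Pow_insert using assms(1) d by (intro sum.union_disjoint) auto
  also have "sum h (insert x ` Pow I) = (\<Sum>S\<in>Pow I. h (insert x S))"
    by (rule sum.reindex[OF inj, unfolded comp_def])
  finally show ?thesis .
qed

lemma pair_pow_identity:
  fixes \<rho> :: "nat \<Rightarrow> real"
  assumes "finite I"
  shows "(\<Sum>S\<in>Pow I. \<Sum>S'\<in>Pow I. \<Prod>i\<in>S \<union> S'. \<rho> i) = (\<Prod>i\<in>I. 1 + 3 * \<rho> i)"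
  using assms
proof (induction I rule: finite_induct)
  case empty then show ?case by simp
next
  case (insert x I)
  have fin: "\<And>S. S \<in> Pow I \<Longrightarrow> finite S" using insert(1) finite_subset by auto
  have pr: "\<And>S S'. S \<in> Pow I \<Longrightarrow> S' \<in> Pow I \<Longrightarrow> (\<Prod>i\<in>insert x (S \<union> S'). \<rho> i) = \<rho> x * (\<Prod>i\<in>S \<union> S'. \<rho> i)"
    using insert(2) fin by (subst prod.insert) auto
  let ?T = "(\<Sum>S\<in>Pow I. \<Sum>S'\<in>Pow I. \<Prod>i\<in>S \<union> S'. \<rho> i)"
  have "(\<Sum>S\<in>Pow (insert x I). \<Sum>S'\<in>Pow (insert x I). \<Prod>i\<in>S \<union> S'. \<rho> i)
     = (\<Sum>S\<in>Pow I. (\<Sum>S'\<in>Pow I. \<Prod>i\<in>S \<union> S'. \<rho> i) + (\<Sum>S'\<in>Pow I. \<Prod>i\<in>S \<union> insert x S'. \<rho> i))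
      + (\<Sum>S\<in>Pow I. (\<Sum>S'\<in>Pow I. \<Prod>i\<in>insert x S \<union> S'. \<rho> i) + (\<Sum>S'\<in>Pow I. \<Prod>i\<in>insert x S \<union> insert x S'. \<rho> i))"
    by (simp add: sum_Pow_insert[OF insert(1,2)])
  also have "\<dots> = (\<Sum>S\<in>Pow I. (\<Sum>S'\<in>Pow I. \<Prod>i\<in>S \<union> S'. \<rho> i) + (\<Sum>S'\<in>Pow I. \<rho> x * (\<Prod>i\<in>S \<union> S'. \<rho> i)))
      + (\<Sum>S\<in>Pow I. (\<Sum>S'\<in>Pow I. \<rho> x * (\<Prod>i\<in>S \<union> S'. \<rho> i)) + (\<Sum>S'\<in>Pow I. \<rho> x * (\<Prod>i\<in>S \<union> S'. \<rho> i)))"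
  proof -
    have a: "\<And>S S'. S \<in> Pow I \<Longrightarrow> S' \<in> Pow I \<Longrightarrow> S \<union> insert x S' = insert x (S \<union> S')" by auto
    have b: "\<And>S S'. insert x S \<union> S' = insert x (S \<union> S')" by auto
    have c: "\<And>S S'. insert x S \<union> insert x S' = insert x (S \<union> S')" by auto
    show ?thesis
      by (intro arg_cong2[where f="(+)"] sum.cong refl) (simp_all only: a b c pr insert_absorb2)
  qed
  also have "\<dots> = (1 + 3 * \<rho> x) * ?T"
    by (simp add: sum.distrib sum_distrib_left[symmetric] algebra_simps)
  also have "\<dots> = (\<Prod>i\<in>insert x I. 1 + 3 * \<rho> i)"
    using insert by simp
  finally show ?case .
qed

locale cov =
  fixes q :: "nat \<Rightarrow> nat" and FF :: "nat set set" and val :: "nat set \<Rightarrow> nat \<Rightarrow> nat" and \<delta> :: real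
  assumes qpos: "\<And>k. k \<ge> 1 \<Longrightarrow> q k \<ge> 1"
    and d0: "0 < \<delta>" and d1: "\<delta> < 1"
    and FFfin: "\<And>F. F \<in> FF \<Longrightarrow> finite F \<and> F \<noteq> {} \<and> 0 \<notin> F"
    and valS: "\<And>F i. F \<in> FF \<Longrightarrow> i \<in> F \<Longrightarrow> val F i \<in> {1..q i}"
begin

definition B where "B j = {F\<in>FF. Max F = j}"
definition alive where "alive j y = {F \<in> B j. \<forall>i\<in>F - {j}. y i = val F i}"
definition V where "V j y = (\<lambda>F. val F j) ` alive j y"
definition dist where "dist j y \<longleftrightarrow> real (card (V j y)) \<le> \<delta> * real (q j)"
definition p where "p j y a = (if dist j y then (if a \<in> V j y then 0 else 1 / (real (q j) - real (card (V j y)))) else 1 / real (q j))"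
primrec W where
  "W 0 y = 1"
| "W (Suc k) y = W k (restrict y {1..k}) * p (Suc k) (restrict y {1..k}) (y (Suc k))"
declare W.simps[simp del]

definition \<rho> where "\<rho> j = 1 / ((1 - \<delta>) * real (q j))"

lemma B_sub: "F \<in> B j \<Longrightarrow> j \<in> F \<and> F \<subseteq> {1..j} \<and> F = insert j (F - {j}) \<and> F - {j} \<subseteq> {1..<j}"
proof -
  assume F: "F \<in> B j"
  then have FF: "F \<in> FF" and M: "Max F = j" by (auto simp: B_def)
  have fin: "finite F" "F \<noteq> {}" "0 \<notin> F" using FFfin[OF FF] by auto
  have "j \<in> F" using Max_in[OF fin(1,2)] M by simp
  moreover have "\<And>i. i \<in> F \<Longrightarrow> 1 \<le> i \<and> i \<le> j"
  proof -
    fix i assume i: "i \<in> F"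
    have "i \<le> j" using Max_ge[OF fin(1) i] M by simp
    moreover have "i \<noteq> 0"
    proof
      assume "i = 0" then show False using i fin(3) by simp
    qed
    ultimately show "1 \<le> i \<and> i \<le> j" by simp
  qed
  ultimately show ?thesis by fastforce
qed

lemma B_sub2: "B j \<subseteq> insert j ` Pow {1..<j}"
proof
  fix F assume "F \<in> B j"
  then have "F = insert j (F - {j})" "F - {j} \<in> Pow {1..<j}" using B_sub by auto
  then show "F \<in> insert j ` Pow {1..<j}" by blast
qed

lemma B_fin: "finite (B j)"
  using B_sub2 finite_subset by blast

lemma alive_fin: "finite (alive j y)"
  unfolding alive_def using B_fin by simp

lemma V_sub: "V j y \<subseteq> {1..q j}"
proof
  fix a assume "a \<in> V j y"
  then obtain F where F: "F \<in> alive j y" and a: "a = val F j" unfolding V_def by auto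
  then have FB: "F \<in> B j" unfolding alive_def by simp
  then have "F \<in> FF" unfolding B_def by simp
  moreover have "j \<in> F" using B_sub[OF FB] by simp
  ultimately show "a \<in> {1..q j}" using valS a by simp
qed

lemma V_fin: "finite (V j y)"
  unfolding V_def using alive_fin by simp

lemma card_V: "card (V j y) \<le> card (alive j y)"
  unfolding V_def using alive_fin by (rule card_image_le)

lemma dist_lt: "j \<ge> 1 \<Longrightarrow> dist j y \<Longrightarrow> real (card (V j y)) < real (q j)"
proof -
  assume j: "j \<ge> 1" and d: "dist j y"
  have "real (q j) \<ge> 1" using qpos[OF j] by simp
  then have "\<delta> * real (q j) < real (q j)" using d1 by simp
  then show ?thesis using d unfolding dist_def by linarith
qed

lemma p_nonneg: "j \<ge> 1 \<Longrightarrow> 0 \<le> p j y a"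
proof -
  assume j: "j \<ge> 1"
  have "dist j y \<Longrightarrow> 0 \<le> 1 / (real (q j) - real (card (V j y)))"
  proof -
    assume "dist j y"
    then have "real (card (V j y)) < real (q j)" by (rule dist_lt[OF j])
    then show ?thesis by simp
  qed
  then show ?thesis unfolding p_def by simp
qed

lemma p_sum: "j \<ge> 1 \<Longrightarrow> (\<Sum>a\<in>{1..q j}. p j y a) = 1"
proof -
  assume j: "j \<ge> 1"
  have q0: "real (q j) \<noteq> 0" using qpos[OF j] by simp
  show ?thesis
  proof (cases "dist j y")
    case True
    have lt: "real (card (V j y)) < real (q j)" using dist_lt[OF j True] .
    have "(\<Sum>a\<in>{1..q j}. p j y a) = (\<Sum>a\<in>{1..q j}. if a \<in> V j y then 0 else 1 / (real (q j) - real (card (V j y))))"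
      unfolding p_def using True by simp
    also have "\<dots> = (\<Sum>a\<in>{1..q j} - V j y. 1 / (real (q j) - real (card (V j y))))"
      by (subst sum.If_cases) (auto simp: Diff_eq)
    also have "\<dots> = real (card ({1..q j} - V j y)) / (real (q j) - real (card (V j y)))"
      by simp
    also have "card ({1..q j} - V j y) = q j - card (V j y)"
      using V_sub V_fin by (simp add: card_Diff_subset)
    also have "real (q j - card (V j y)) = real (q j) - real (card (V j y))"
      using lt by (simp add: of_nat_diff)
    also have "\<dots> / (real (q j) - real (card (V j y))) = 1"
      using lt by (intro divide_self) linarith
    finally show ?thesis .
  next
    case False
    have "(\<Sum>a\<in>{1..q j}. p j y a) = (\<Sum>a\<in>{1..q j}. 1 / real (q j))"
      unfolding p_def using False by simp
    also have "\<dots> = real (q j) * (1 / real (q j))" by simp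
    also have "\<dots> = 1" using q0 by simp
    finally show ?thesis .
  qed
qed

lemma p_sum': "(\<Sum>a\<in>{1..q (Suc k)}. p (Suc k) y a) = 1"
  by (rule p_sum) simp

lemma rho_nonneg: "0 \<le> \<rho> j"
  unfolding \<rho>_def using d1 by simp

lemma p_le: "j \<ge> 1 \<Longrightarrow> p j y a \<le> \<rho> j"
proof -
  assume j: "j \<ge> 1"
  have q1: "real (q j) \<ge> 1" using qpos[OF j] by simp
  have "1 / real (q j) \<le> \<rho> j"
    unfolding \<rho>_def using d0 d1 q1 by (simp add: frac_le mult_le_cancel_right1)
  moreover have "1 / (real (q j) - real (card (V j y))) \<le> \<rho> j" if d: "dist j y"
  proof -
    have "(1 - \<delta>) * real (q j) \<le> real (q j) - real (card (V j y))"
      using d unfolding dist_def by (simp add: algebra_simps)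
    moreover have "0 < (1 - \<delta>) * real (q j)" using d1 q1 by simp
    ultimately show ?thesis unfolding \<rho>_def by (simp add: frac_le)
  qed
  ultimately show ?thesis unfolding p_def using rho_nonneg by auto
qed


lemma restrict_upd: "y \<in> grid q k \<Longrightarrow> restrict (y(Suc k := a)) {1..k} = y"
  by (rule ext) (auto simp: restrict_def grid_def PiE_def extensional_def)

lemma W_upd: "y \<in> grid q k \<Longrightarrow> W (Suc k) (y(Suc k := a)) = W k y * p (Suc k) y a"
  by (simp only: W.simps fun_upd_same restrict_upd)

lemma W_nonneg: "0 \<le> W k y"
proof (induction k arbitrary: y)
  case 0 then show ?case by (simp add: W.simps)
next
  case (Suc k) then show ?case using p_nonneg[of "Suc k"] by (simp add: W.simps)
qed

lemma W_sum: "(\<Sum>y\<in>grid q k. W k y) = 1"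
proof (induction k)
  case 0 then show ?case by (simp add: grid_0 W.simps)
next
  case (Suc k)
  have "(\<Sum>y\<in>grid q (Suc k). W (Suc k) y) = (\<Sum>y\<in>grid q k. \<Sum>a\<in>{1..q (Suc k)}. W k y * p (Suc k) y a)"
    unfolding sum_grid_Suc by (intro sum.cong refl) (simp add: W_upd)
  also have "\<dots> = (\<Sum>y\<in>grid q k. W k y)"
    by (intro sum.cong refl) (simp only: sum_distrib_left[symmetric] p_sum' mult_1_right)
  finally show ?case using Suc by simp
qed

lemma W_agree:
  "T \<subseteq> {1..k} \<Longrightarrow> (\<Sum>y\<in>grid q k. if (\<forall>i\<in>T. y i = b i) then W k y else 0) \<le> (\<Prod>i\<in>T. \<rho> i)"
proof (induction k arbitrary: T)
  case 0
  then have "T = {}" by auto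
  then show ?case by (simp add: grid_0 W.simps)
next
  case (Suc k)
  show ?case
  proof (cases "Suc k \<in> T")
    case True
    let ?T = "T - {Suc k}"
    have T': "?T \<subseteq> {1..k}" using Suc.prems by auto
    have finT: "finite T" using Suc.prems finite_subset by blast
    have "(\<Sum>y\<in>grid q (Suc k). if (\<forall>i\<in>T. y i = b i) then W (Suc k) y else 0)
      = (\<Sum>y\<in>grid q k. \<Sum>a\<in>{1..q (Suc k)}. if (\<forall>i\<in>?T. y i = b i) then (if a = b (Suc k) then W k y * p (Suc k) y a else 0) else 0)"
      unfolding sum_grid_Suc
    proof (intro sum.cong refl)
      fix y a assume y: "y \<in> grid q k" and a: "a \<in> {1..q (Suc k)}"
      have "(\<forall>i\<in>T. (y(Suc k := a)) i = b i) \<longleftrightarrow> (\<forall>i\<in>?T. y i = b i) \<and> a = b (Suc k)"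
        using True by auto
      then show "(if \<forall>i\<in>T. (y(Suc k := a)) i = b i then W (Suc k) (y(Suc k := a)) else 0) =
          (if \<forall>i\<in>?T. y i = b i then if a = b (Suc k) then W k y * p (Suc k) y a else 0 else 0)"
        using W_upd[OF y] by simp
    qed
    also have "\<dots> \<le> (\<Sum>y\<in>grid q k. (if (\<forall>i\<in>?T. y i = b i) then W k y else 0) * \<rho> (Suc k))"
    proof (intro sum_mono)
      fix y assume y: "y \<in> grid q k"
      have "(\<Sum>a\<in>{1..q (Suc k)}. if a = b (Suc k) then W k y * p (Suc k) y a else 0) \<le> W k y * \<rho> (Suc k)"
      proof -
        have "(\<Sum>a\<in>{1..q (Suc k)}. if a = b (Suc k) then W k y * p (Suc k) y a else 0)
           = (if b (Suc k) \<in> {1..q (Suc k)} then W k y * p (Suc k) y (b (Suc k)) else 0)"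
          by (rule sum.delta) simp
        also have "\<dots> \<le> W k y * \<rho> (Suc k)"
          using p_le[of "Suc k" y "b (Suc k)"] W_nonneg[of k y] rho_nonneg[of "Suc k"]
          by (auto intro: mult_left_mono)
        finally show ?thesis .
      qed
      then show "(\<Sum>a\<in>{1..q (Suc k)}. if (\<forall>i\<in>?T. y i = b i) then (if a = b (Suc k) then W k y * p (Suc k) y a else 0) else 0)
          \<le> (if (\<forall>i\<in>?T. y i = b i) then W k y else 0) * \<rho> (Suc k)"
      proof (cases "\<forall>i\<in>?T. y i = b i")
        case True then show ?thesis using \<open>_ \<le> W k y * \<rho> (Suc k)\<close> by simp
      next
        case False then show ?thesis by (simp only: False if_False sum.neutral_const mult_zero_left order_refl)
      qed
    qed
    also have "\<dots> = (\<Sum>y\<in>grid q k. (if (\<forall>i\<in>?T. y i = b i) then W k y else 0)) * \<rho> (Suc k)"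
      by (simp add: sum_distrib_right)
    also have "\<dots> \<le> (\<Prod>i\<in>?T. \<rho> i) * \<rho> (Suc k)"
      using Suc.IH[OF T'] rho_nonneg by (rule mult_right_mono)
    also have "\<dots> = (\<Prod>i\<in>T. \<rho> i)"
      using prod.remove[OF finT True, of \<rho>] by (simp add: mult.commute)
    finally show ?thesis .
  next
    case False
    have T': "T \<subseteq> {1..k}"
    proof
      fix x assume x: "x \<in> T"
      then have "x \<in> {1..Suc k}" "x \<noteq> Suc k" using Suc.prems False by auto
      then show "x \<in> {1..k}" by auto
    qed
    have "(\<Sum>y\<in>grid q (Suc k). if (\<forall>i\<in>T. y i = b i) then W (Suc k) y else 0)
      = (\<Sum>y\<in>grid q k. \<Sum>a\<in>{1..q (Suc k)}. if (\<forall>i\<in>T. y i = b i) then W k y * p (Suc k) y a else 0)"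
      unfolding sum_grid_Suc
    proof (intro sum.cong refl)
      fix y a assume y: "y \<in> grid q k" and a: "a \<in> {1..q (Suc k)}"
      have "(\<forall>i\<in>T. (y(Suc k := a)) i = b i) \<longleftrightarrow> (\<forall>i\<in>T. y i = b i)"
        using False by auto
      then show "(if \<forall>i\<in>T. (y(Suc k := a)) i = b i then W (Suc k) (y(Suc k := a)) else 0) =
          (if \<forall>i\<in>T. y i = b i then W k y * p (Suc k) y a else 0)"
        using W_upd[OF y] by simp
    qed
    also have "\<dots> = (\<Sum>y\<in>grid q k. if (\<forall>i\<in>T. y i = b i) then W k y else 0)"
    proof (intro sum.cong refl)
      fix y assume "y \<in> grid q k"
      show "(\<Sum>a\<in>{1..q (Suc k)}. if (\<forall>i\<in>T. y i = b i) then W k y * p (Suc k) y a else 0) =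
        (if (\<forall>i\<in>T. y i = b i) then W k y else 0)"
      proof (cases "\<forall>i\<in>T. y i = b i")
        case True then show ?thesis
          by (simp only: if_P[OF True] sum_distrib_left[symmetric] p_sum' mult_1_right)
      next
        case False then show ?thesis by (simp only: False if_False sum.neutral_const)
      qed
    qed
    also have "\<dots> \<le> (\<Prod>i\<in>T. \<rho> i)" by (rule Suc.IH[OF T'])
    finally show ?thesis .
  qed
qed


definition G where "G k y \<longleftrightarrow> (\<forall>F\<in>FF. Max F \<le> k \<longrightarrow> (\<exists>i\<in>F. y i \<noteq> val F i))"
definition badS where "badS k = (\<Sum>y\<in>grid q k. if dist (Suc k) y then 0 else W k y)"

lemma G_step:
  assumes y: "y \<in> grid q k" and G: "G k y" and a: "a \<notin> V (Suc k) y"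
  shows "G (Suc k) (y(Suc k := a))"
  unfolding G_def
proof (intro ballI impI)
  fix F assume F: "F \<in> FF" and M: "Max F \<le> Suc k"
  have fin: "finite F" "F \<noteq> {}" using FFfin[OF F] by auto
  show "\<exists>i\<in>F. (y(Suc k := a)) i \<noteq> val F i"
  proof (cases "Max F \<le> k")
    case True
    then obtain i where i: "i \<in> F" "y i \<noteq> val F i" using G F unfolding G_def by blast
    have "i \<le> k" using Max_ge[OF fin(1) i(1)] True by simp
    then show ?thesis using i by (intro bexI[of _ i]) auto
  next
    case False
    then have FB: "F \<in> B (Suc k)" using M F unfolding B_def by simp
    have sk: "Suc k \<in> F" using B_sub[OF FB] by simp
    show ?thesis
    proof (cases "\<forall>i\<in>F - {Suc k}. y i = val F i")
      case True
      then have "F \<in> alive (Suc k) y" using FB unfolding alive_def by simp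
      then have "val F (Suc k) \<in> V (Suc k) y" unfolding V_def by simp
      then have "a \<noteq> val F (Suc k)" using a by auto
      then show ?thesis using sk by (intro bexI[of _ "Suc k"]) auto
    next
      case False
      then obtain i where "i \<in> F - {Suc k}" "y i \<noteq> val F i" by blast
      then show ?thesis by (intro bexI[of _ i]) auto
    qed
  qed
qed

lemma G_0: "G 0 y"
  unfolding G_def
proof (intro ballI impI)
  fix F assume F: "F \<in> FF" and M: "Max F \<le> 0"
  have fin: "finite F" "F \<noteq> {}" "0 \<notin> F" using FFfin[OF F] by auto
  have "Max F \<in> F" using Max_in[OF fin(1,2)] .
  with M fin(3) show "\<exists>i\<in>F. y i \<noteq> val F i" by simp
qed

lemma G_point:
  assumes y: "y \<in> grid q k"
  shows "(\<Sum>a\<in>{1..q (Suc k)}. if G k y \<and> a \<notin> V (Suc k) y then W k y * p (Suc k) y a else 0)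
     \<ge> (if G k y then W k y else 0) - (if dist (Suc k) y then 0 else W k y)"
proof -
  have Wn: "0 \<le> W k y" by (rule W_nonneg)
  have pn: "\<And>a. 0 \<le> W k y * p (Suc k) y a" using Wn p_nonneg[of "Suc k"] by simp
  have lhs_nn: "0 \<le> (\<Sum>a\<in>{1..q (Suc k)}. if G k y \<and> a \<notin> V (Suc k) y then W k y * p (Suc k) y a else 0)"
    using pn by (intro sum_nonneg) simp
  show ?thesis
  proof (cases "G k y")
    case False
    then show ?thesis using lhs_nn Wn by simp
  next
    case True
    show ?thesis
    proof (cases "dist (Suc k) y")
      case d: True
      have "(\<Sum>a\<in>{1..q (Suc k)}. if G k y \<and> a \<notin> V (Suc k) y then W k y * p (Suc k) y a else 0)
          = (\<Sum>a\<in>{1..q (Suc k)}. W k y * p (Suc k) y a)"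
        using True d by (intro sum.cong refl) (simp add: p_def)
      also have "\<dots> = W k y"
        by (simp only: sum_distrib_left[symmetric] p_sum' mult_1_right)
      finally show ?thesis using True d by simp
    next
      case False
      then show ?thesis using True lhs_nn by simp
    qed
  qed
qed

lemma G_main: "(\<Sum>y\<in>grid q k. if G k y then W k y else 0) \<ge> 1 - (\<Sum>i<k. badS i)"
proof (induction k)
  case 0
  then show ?case by (simp add: grid_0 W.simps G_0)
next
  case (Suc k)
  have e1: "(\<Sum>y\<in>grid q (Suc k). if G (Suc k) y then W (Suc k) y else 0)
     = (\<Sum>y\<in>grid q k. \<Sum>a\<in>{1..q (Suc k)}. if G (Suc k) (y(Suc k := a)) then W k y * p (Suc k) y a else 0)"
    unfolding sum_grid_Suc
  proof (intro sum.cong refl)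
    fix y a assume y: "y \<in> grid q k"
    show "(if G (Suc k) (y(Suc k := a)) then W (Suc k) (y(Suc k := a)) else 0) =
      (if G (Suc k) (y(Suc k := a)) then W k y * p (Suc k) y a else 0)"
      by (simp only: W_upd[OF y])
  qed
  have e2: "(\<Sum>y\<in>grid q k. \<Sum>a\<in>{1..q (Suc k)}. if G k y \<and> a \<notin> V (Suc k) y then W k y * p (Suc k) y a else 0)
     \<le> (\<Sum>y\<in>grid q k. \<Sum>a\<in>{1..q (Suc k)}. if G (Suc k) (y(Suc k := a)) then W k y * p (Suc k) y a else 0)"
  proof (intro sum_mono)
    fix y a assume y: "y \<in> grid q k" and a: "a \<in> {1..q (Suc k)}"
    have pn: "0 \<le> W k y * p (Suc k) y a" using W_nonneg[of k y] p_nonneg[of "Suc k"] by simp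
    show "(if G k y \<and> a \<notin> V (Suc k) y then W k y * p (Suc k) y a else 0)
        \<le> (if G (Suc k) (y(Suc k := a)) then W k y * p (Suc k) y a else 0)"
    proof (cases "G k y \<and> a \<notin> V (Suc k) y")
      case True
      then have "G (Suc k) (y(Suc k := a))" using G_step[OF y] by blast
      then show ?thesis using True by simp
    next
      case False
      have "0 \<le> (if G (Suc k) (y(Suc k := a)) then W k y * p (Suc k) y a else 0)" using pn by simp
      then show ?thesis by (simp only: if_not_P[OF False])
    qed
  qed
  have e3: "(\<Sum>y\<in>grid q k. (if G k y then W k y else 0) - (if dist (Suc k) y then 0 else W k y))
     \<le> (\<Sum>y\<in>grid q k. \<Sum>a\<in>{1..q (Suc k)}. if G k y \<and> a \<notin> V (Suc k) y then W k y * p (Suc k) y a else 0)"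
    by (intro sum_mono G_point)
  have e4: "(\<Sum>y\<in>grid q k. (if G k y then W k y else 0) - (if dist (Suc k) y then 0 else W k y))
     = (\<Sum>y\<in>grid q k. if G k y then W k y else 0) - badS k"
    unfolding badS_def by (rule sum_subtractf)
  have e5: "(\<Sum>i<Suc k. badS i) = (\<Sum>i<k. badS i) + badS k" by simp
  show ?case using e1 e2 e3 e4 e5 Suc.IH by linarith
qed


lemma card_alive_sum: "real (card (alive j y)) = (\<Sum>F\<in>B j. if (\<forall>i\<in>F-{j}. y i = val F i) then 1 else 0)"
proof -
  have "alive j y = B j \<inter> {F. \<forall>i\<in>F-{j}. y i = val F i}" unfolding alive_def by auto
  then show ?thesis using B_fin[of j] by (simp add: sum.If_cases)
qed

lemma insert_pow_sum:
  fixes g :: "nat set \<Rightarrow> nat set \<Rightarrow> real"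
  assumes "finite I" "j \<notin> I"
  shows "(\<Sum>F\<in>insert j ` Pow I. \<Sum>F'\<in>insert j ` Pow I. g F F') = (\<Sum>S\<in>Pow I. \<Sum>S'\<in>Pow I. g (insert j S) (insert j S'))"
proof -
  have inj: "inj_on (insert j) (Pow I)"
    unfolding inj_on_def using assms(2) by (metis PowD insert_ident subsetD)
  show ?thesis
    by (simp add: sum.reindex[OF inj])
qed

lemma pairs_bound:
  "(\<Sum>F\<in>B (Suc k). \<Sum>F'\<in>B (Suc k). \<Prod>i\<in>(F \<union> F') - {Suc k}. \<rho> i) \<le> (\<Prod>i\<in>{1..<Suc k}. 1 + 3 * \<rho> i)"
proof -
  let ?IP = "insert (Suc k) ` Pow {1..<Suc k}"
  let ?g = "\<lambda>F F'. \<Prod>i\<in>(F \<union> F') - {Suc k}. \<rho> i"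
  have gn: "\<And>F F'. 0 \<le> ?g F F'" using rho_nonneg by (simp add: prod_nonneg)
  have sub: "B (Suc k) \<subseteq> ?IP" by (rule B_sub2)
  have finIP: "finite ?IP" by simp
  have "(\<Sum>F\<in>B (Suc k). \<Sum>F'\<in>B (Suc k). ?g F F') \<le> (\<Sum>F\<in>B (Suc k). \<Sum>F'\<in>?IP. ?g F F')"
    by (intro sum_mono sum_mono2 finIP sub gn)
  also have "\<dots> \<le> (\<Sum>F\<in>?IP. \<Sum>F'\<in>?IP. ?g F F')"
    by (intro sum_mono2 finIP sub sum_nonneg gn)
  also have "\<dots> = (\<Sum>S\<in>Pow {1..<Suc k}. \<Sum>S'\<in>Pow {1..<Suc k}. ?g (insert (Suc k) S) (insert (Suc k) S'))"
    by (rule insert_pow_sum) auto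
  also have "\<dots> = (\<Sum>S\<in>Pow {1..<Suc k}. \<Sum>S'\<in>Pow {1..<Suc k}. \<Prod>i\<in>S \<union> S'. \<rho> i)"
  proof (intro sum.cong refl)
    fix S S' assume "S \<in> Pow {1..<Suc k}" "S' \<in> Pow {1..<Suc k}"
    then have "(insert (Suc k) S \<union> insert (Suc k) S') - {Suc k} = S \<union> S'" by auto
    then show "?g (insert (Suc k) S) (insert (Suc k) S') = (\<Prod>i\<in>S \<union> S'. \<rho> i)" by simp
  qed
  also have "\<dots> = (\<Prod>i\<in>{1..<Suc k}. 1 + 3 * \<rho> i)"
    by (rule pair_pow_identity) simp
  finally show ?thesis .
qed

lemma bad_bound: "badS k \<le> (\<Prod>i\<in>{1..<Suc k}. 1 + 3 * \<rho> i) / (\<delta> * real (q (Suc k)))^2"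
proof -
  define D where "D = \<delta> * real (q (Suc k))"
  have q1: "real (q (Suc k)) \<ge> 1" using qpos[of "Suc k"] by simp
  have D0: "0 < D" unfolding D_def using d0 q1 by simp
  define Ak where "Ak F y \<longleftrightarrow> (\<forall>i\<in>F-{Suc k}. y i = val F i)" for F and y :: "nat \<Rightarrow> nat"
  define c where "c y = real (card (alive (Suc k) y))" for y
  have s1: "badS k \<le> (\<Sum>y\<in>grid q k. W k y * (c y ^ 2 / D ^ 2))"
    unfolding badS_def
  proof (intro sum_mono)
    fix y assume y: "y \<in> grid q k"
    have Wn: "0 \<le> W k y" by (rule W_nonneg)
    show "(if dist (Suc k) y then 0 else W k y) \<le> W k y * (c y ^ 2 / D ^ 2)"
    proof (cases "dist (Suc k) y")
      case True then show ?thesis using Wn D0 by simp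
    next
      case False
      then have "D < real (card (V (Suc k) y))" unfolding dist_def D_def by simp
      also have "\<dots> \<le> c y" unfolding c_def using card_V by simp
      finally have "D ^ 2 < c y ^ 2" using D0 by (intro power_strict_mono) auto
      then have "1 \<le> c y ^ 2 / D ^ 2" using D0 by simp
      then have "W k y * 1 \<le> W k y * (c y ^ 2 / D ^ 2)" using Wn by (rule mult_left_mono)
      then show ?thesis using False by simp
    qed
  qed
  have s2: "(\<Sum>y\<in>grid q k. W k y * (c y ^ 2 / D ^ 2)) = (\<Sum>y\<in>grid q k. W k y * c y ^ 2) / D ^ 2"
    by (simp add: sum_divide_distrib)
  have s3: "(\<Sum>y\<in>grid q k. W k y * c y ^ 2) = (\<Sum>F\<in>B (Suc k). \<Sum>F'\<in>B (Suc k). \<Sum>y\<in>grid q k. if Ak F y \<and> Ak F' y then W k y else 0)"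
  proof -
    have "\<And>y. W k y * c y ^ 2 = (\<Sum>F\<in>B (Suc k). \<Sum>F'\<in>B (Suc k). if Ak F y \<and> Ak F' y then W k y else 0)"
    proof -
      fix y
      have "c y = (\<Sum>F\<in>B (Suc k). if Ak F y then 1 else 0)" unfolding c_def Ak_def by (rule card_alive_sum)
      then have "W k y * c y ^ 2 = W k y * ((\<Sum>F\<in>B (Suc k). if Ak F y then 1 else 0) * (\<Sum>F'\<in>B (Suc k). if Ak F' y then 1 else 0))"
        by (simp add: power2_eq_square)
      also have "\<dots> = (\<Sum>F\<in>B (Suc k). \<Sum>F'\<in>B (Suc k). W k y * ((if Ak F y then 1 else 0) * (if Ak F' y then 1 else 0)))"
        by (subst sum_product) (simp only: sum_distrib_left)
      also have "\<dots> = (\<Sum>F\<in>B (Suc k). \<Sum>F'\<in>B (Suc k). if Ak F y \<and> Ak F' y then W k y else 0)"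
        by (intro sum.cong refl) simp
      finally show "W k y * c y ^ 2 = (\<Sum>F\<in>B (Suc k). \<Sum>F'\<in>B (Suc k). if Ak F y \<and> Ak F' y then W k y else 0)" .
    qed
    then have "(\<Sum>y\<in>grid q k. W k y * c y ^ 2) = (\<Sum>y\<in>grid q k. \<Sum>F\<in>B (Suc k). \<Sum>F'\<in>B (Suc k). if Ak F y \<and> Ak F' y then W k y else 0)"
      by simp
    also have "\<dots> = (\<Sum>F\<in>B (Suc k). \<Sum>y\<in>grid q k. \<Sum>F'\<in>B (Suc k). if Ak F y \<and> Ak F' y then W k y else 0)"
      by (rule sum.swap)
    also have "\<dots> = (\<Sum>F\<in>B (Suc k). \<Sum>F'\<in>B (Suc k). \<Sum>y\<in>grid q k. if Ak F y \<and> Ak F' y then W k y else 0)"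
      by (intro sum.cong refl sum.swap)
    finally show ?thesis .
  qed
  have s4: "(\<Sum>y\<in>grid q k. if Ak F y \<and> Ak F' y then W k y else 0) \<le> (\<Prod>i\<in>(F \<union> F') - {Suc k}. \<rho> i)"
    if F: "F \<in> B (Suc k)" and F': "F' \<in> B (Suc k)" for F F'
  proof -
    define bb where "bb i = (if i \<in> F then val F i else val F' i)" for i
    have T: "(F \<union> F') - {Suc k} \<subseteq> {1..k}" using B_sub[OF F] B_sub[OF F'] by auto
    have "(\<Sum>y\<in>grid q k. if Ak F y \<and> Ak F' y then W k y else 0)
        \<le> (\<Sum>y\<in>grid q k. if (\<forall>i\<in>(F \<union> F') - {Suc k}. y i = bb i) then W k y else 0)"
    proof (intro sum_mono)
      fix y
      have "Ak F y \<and> Ak F' y \<Longrightarrow> (\<forall>i\<in>(F \<union> F') - {Suc k}. y i = bb i)"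
        unfolding Ak_def bb_def by auto
      then show "(if Ak F y \<and> Ak F' y then W k y else 0) \<le> (if (\<forall>i\<in>(F \<union> F') - {Suc k}. y i = bb i) then W k y else 0)"
        using W_nonneg[of k y] by auto
    qed
    also have "\<dots> \<le> (\<Prod>i\<in>(F \<union> F') - {Suc k}. \<rho> i)" by (rule W_agree[OF T])
    finally show ?thesis .
  qed
  have "(\<Sum>F\<in>B (Suc k). \<Sum>F'\<in>B (Suc k). \<Sum>y\<in>grid q k. if Ak F y \<and> Ak F' y then W k y else 0)
      \<le> (\<Sum>F\<in>B (Suc k). \<Sum>F'\<in>B (Suc k). \<Prod>i\<in>(F \<union> F') - {Suc k}. \<rho> i)"
    by (intro sum_mono s4)
  also have "\<dots> \<le> (\<Prod>i\<in>{1..<Suc k}. 1 + 3 * \<rho> i)" by (rule pairs_bound)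
  finally have s5: "(\<Sum>y\<in>grid q k. W k y * c y ^ 2) \<le> (\<Prod>i\<in>{1..<Suc k}. 1 + 3 * \<rho> i)"
    using s3 by simp
  have "badS k \<le> (\<Sum>y\<in>grid q k. W k y * c y ^ 2) / D ^ 2" using s1 s2 by simp
  also have "\<dots> \<le> (\<Prod>i\<in>{1..<Suc k}. 1 + 3 * \<rho> i) / D ^ 2"
    using s5 D0 by (intro divide_right_mono) auto
  finally show ?thesis unfolding D_def .
qed

lemma bad_zero: "(\<forall>F\<in>FF. Max F \<noteq> Suc k) \<Longrightarrow> badS k = 0"
proof -
  assume h: "\<forall>F\<in>FF. Max F \<noteq> Suc k"
  then have "B (Suc k) = {}" unfolding B_def by auto
  then have "\<And>y. V (Suc k) y = {}" unfolding V_def alive_def by auto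
  then have "\<And>y. dist (Suc k) y" unfolding dist_def using d0 by simp
  then show ?thesis unfolding badS_def by simp
qed


lemma core:
  assumes big: "\<forall>F\<in>FF. \<exists>i\<in>F. i > C"
    and FFn: "\<forall>F\<in>FF. F \<subseteq> {1..n}"
    and sm: "(\<Sum>j\<in>{C<..n}. (\<Prod>i\<in>{1..<j}. 1 + 3 * \<rho> i) / (\<delta> * real (q j))^2) < 1"
  shows "\<exists>y\<in>grid q n. \<forall>F\<in>FF. \<exists>i\<in>F. y i \<noteq> val F i"
proof -
  define a where "a j = (\<Prod>i\<in>{1..<j}. 1 + 3 * \<rho> i) / (\<delta> * real (q j))^2" for j
  have "(\<Sum>i<n. badS i) \<le> (\<Sum>i<n. if C < Suc i then a (Suc i) else 0)"
  proof (intro sum_mono)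
    fix i
    show "badS i \<le> (if C < Suc i then a (Suc i) else 0)"
    proof (cases "C < Suc i")
      case True then show ?thesis using bad_bound[of i] unfolding a_def by simp
    next
      case False
      have "\<forall>F\<in>FF. Max F \<noteq> Suc i"
      proof
        fix F assume F: "F \<in> FF"
        obtain x where x: "x \<in> F" "x > C" using big F by blast
        have "x \<le> Max F" using FFfin[OF F] x(1) by simp
        then show "Max F \<noteq> Suc i" using x(2) False by simp
      qed
      then show ?thesis using bad_zero False by simp
    qed
  qed
  also have "\<dots> = (\<Sum>j\<in>Suc ` {..<n}. if C < j then a j else 0)"
    by (simp add: sum.reindex)
  also have "\<dots> = (\<Sum>j\<in>{1..n}. if C < j then a j else 0)"
    by (simp add: image_Suc_lessThan)
  also have "\<dots> = (\<Sum>j\<in>{1..n} \<inter> {j. C < j}. a j)"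
    by (simp add: sum.If_cases)
  also have "{1..n} \<inter> {j. C < j} = {C<..n}" by auto
  finally have "(\<Sum>i<n. badS i) < 1" using sm unfolding a_def by simp
  then have pos: "0 < (\<Sum>y\<in>grid q n. if G n y then W n y else 0)" using G_main[of n] by simp
  obtain y where y: "y \<in> grid q n" "G n y"
  proof (rule ccontr)
    assume "\<not> thesis"
    then have "\<forall>y\<in>grid q n. \<not> G n y" using that by blast
    then have "(\<Sum>y\<in>grid q n. if G n y then W n y else 0) = 0" by simp
    then show False using pos by simp
  qed
  have "\<forall>F\<in>FF. \<exists>i\<in>F. y i \<noteq> val F i"
  proof
    fix F assume F: "F \<in> FF"
    have fin: "finite F" "F \<noteq> {}" using FFfin[OF F] by auto
    have "Max F \<in> F" using Max_in[OF fin] .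
    moreover have "F \<subseteq> {1..n}" using FFn F by blast
    ultimately have "Max F \<in> {1..n}" by blast
    then have "Max F \<le> n" by simp
    then show "\<exists>i\<in>F. y i \<noteq> val F i" using y(2) F unfolding G_def by blast
  qed
  then show ?thesis using y(1) by blast
qed

end

theorem theorem1p4:
  fixes q :: "nat \<Rightarrow> nat"
  assumes "\<forall>k\<ge>1. q k \<ge> 2"
    and "liminf (\<lambda>k. ereal (real (q k) / real k)) > 3"
  shows "\<exists>C::nat. \<forall>n::nat. \<forall>\<A>::(nat \<Rightarrow> nat set) set.
           (\<forall>A\<in>\<A>. is_hyperplane q n A) \<and> (\<Union>A\<in>\<A>. hyp_set n A) = grid q n \<longrightarrow>
           (\<exists>A\<in>\<A>. \<exists>A'\<in>\<A>. A \<noteq> A' \<and> parallel n A A') \<or>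
           (\<exists>A\<in>\<A>. fixed_coords n A \<subseteq> {1..C})"
proof -
  have q2: "\<And>k. k \<ge> 1 \<Longrightarrow> q k \<ge> 2" using assms(1) by blast
  obtain z :: ereal where z: "3 < z" "z < liminf (\<lambda>k. ereal (real (q k) / real k))"
    using dense[OF assms(2)] by blast
  obtain c :: real where zc: "z = ereal c"
    using z by (cases z) auto
  have c3: "c > 3" using z(1) zc by simp
  have "ereal c < liminf (\<lambda>k. ereal (real (q k) / real k))" using z(2) zc by simp
  then have "eventually (\<lambda>k. ereal (real (q k) / real k) > ereal c) sequentially"
    by (rule less_LiminfD)
  then have "eventually (\<lambda>k. real (q k) / real k > c) sequentially" by simp
  then obtain K where K: "\<And>k. k \<ge> K \<Longrightarrow> real (q k) / real k > c"
    unfolding eventually_sequentially by auto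
  define K0 where "K0 = max K 1"
  have K01: "K0 \<ge> 1" unfolding K0_def by simp
  have qc: "real (q j) \<ge> c * real j" if j: "j \<ge> K0" for j
  proof -
    have jp: "real j > 0" using j K01 by simp
    have "real (q j) / real j > c" using K j unfolding K0_def by simp
    then show ?thesis using jp by (simp add: pos_less_divide_eq less_imp_le)
  qed
  define \<delta> where "\<delta> = (1 - 3 / c) / 2"
  define t where "t = 6 / (c + 3)"
  have d0: "0 < \<delta>" unfolding \<delta>_def using c3 by simp
  have d1: "\<delta> < 1"
  proof -
    have "0 < 3 / c" using c3 by simp
    then show ?thesis unfolding \<delta>_def using c3 by (simp add: field_simps)
  qed
  have t1: "t < 1" unfolding t_def using c3 by simp
  have dc: "(1 - \<delta>) * c = (c + 3) / 2" unfolding \<delta>_def using c3 by (simp add: field_simps)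
  have rt: "3 * (1 / ((1 - \<delta>) * real (q j))) \<le> t / real j" if j: "j \<ge> K0" for j
  proof -
    have jp: "real j > 0" using j K01 by simp
    have "(1 - \<delta>) * (c * real j) \<le> (1 - \<delta>) * real (q j)"
      using qc[OF j] d1 by (intro mult_left_mono) auto
    moreover have "0 < (1 - \<delta>) * (c * real j)" using d1 c3 jp by simp
    ultimately have "3 * (1 / ((1 - \<delta>) * real (q j))) \<le> 3 * (1 / ((1 - \<delta>) * (c * real j)))"
    proof -
      assume le: "(1 - \<delta>) * (c * real j) \<le> (1 - \<delta>) * real (q j)" and p1: "0 < (1 - \<delta>) * (c * real j)"
      have p2: "0 < (1 - \<delta>) * real (q j)" using le p1 by linarith
      have "1 / ((1 - \<delta>) * real (q j)) \<le> 1 / ((1 - \<delta>) * (c * real j))"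
        by (rule divide_left_mono[OF le zero_le_one mult_pos_pos[OF p2 p1]])
      then show ?thesis by simp
    qed
    also have "(1 - \<delta>) * (c * real j) = (c + 3) / 2 * real j" using dc by (simp add: mult.assoc[symmetric])
    also have "3 * (1 / ((c + 3) / 2 * real j)) = t / real j" unfolding t_def by simp
    finally show ?thesis .
  qed
  have summ: "summable (\<lambda>j. (\<Prod>i\<in>{1..<j}. 1 + 3 * (1 / ((1 - \<delta>) * real (q i)))) / (\<delta> * real (q j))^2)"
    by (rule summable_a[OF K01 _ d0 d1 t1 qc rt]) (use c3 in auto)
  obtain C where C: "\<And>n. (\<Sum>j\<in>{C<..n}. (\<Prod>i\<in>{1..<j}. 1 + 3 * (1 / ((1 - \<delta>) * real (q i)))) / (\<delta> * real (q j))^2) < 1"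
  proof -
    have nn: "0 \<le> (\<Prod>i\<in>{1..<j}. 1 + 3 * (1 / ((1 - \<delta>) * real (q i)))) / (\<delta> * real (q j))^2" for j
    proof -
      have "\<And>i. 0 \<le> 1 + 3 * (1 / ((1 - \<delta>) * real (q i)))" using d1 by simp
      then show ?thesis by (intro divide_nonneg_nonneg prod_nonneg) auto
    qed
    show ?thesis using tail_small[OF nn summ] that by blast
  qed
  show ?thesis
  proof (intro exI[of _ C] allI impI)
    fix n :: nat and \<A> :: "(nat \<Rightarrow> nat set) set"
    assume H: "(\<forall>A\<in>\<A>. is_hyperplane q n A) \<and> (\<Union>A\<in>\<A>. hyp_set n A) = grid q n"
    show "(\<exists>A\<in>\<A>. \<exists>A'\<in>\<A>. A \<noteq> A' \<and> parallel n A A') \<or> (\<exists>A\<in>\<A>. fixed_coords n A \<subseteq> {1..C})"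
    proof (rule ccontr)
      assume nn: "\<not> ?thesis"
      then have np: "\<And>A A'. A \<in> \<A> \<Longrightarrow> A' \<in> \<A> \<Longrightarrow> fixed_coords n A = fixed_coords n A' \<Longrightarrow> A = A'"
        unfolding parallel_def by blast
      have nc: "\<And>A. A \<in> \<A> \<Longrightarrow> \<not> fixed_coords n A \<subseteq> {1..C}" using nn by blast
      define FF where "FF = fixed_coords n ` \<A>"
      define sel where "sel F = (SOME A. A \<in> \<A> \<and> fixed_coords n A = F)" for F
      define val where "val F i = the_elem (sel F i)" for F i
      have sel: "sel (fixed_coords n A) = A" if A: "A \<in> \<A>" for A
      proof -
        have "\<exists>A'. A' \<in> \<A> \<and> fixed_coords n A' = fixed_coords n A" using A by blast
        then have "sel (fixed_coords n A) \<in> \<A> \<and> fixed_coords n (sel (fixed_coords n A)) = fixed_coords n A"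
          unfolding sel_def by (rule someI_ex)
        then show ?thesis using np A by blast
      qed
      have fc_sub: "fixed_coords n A \<subseteq> {1..n}" for A unfolding fixed_coords_def by auto
      have valA: "val (fixed_coords n A) i = a" if "A \<in> \<A>" "A i = {a}" for A i a
        unfolding val_def using sel[OF that(1)] that(2) by simp
      interpret cv: cov q FF val \<delta>
      proof
        show "\<And>k. 1 \<le> k \<Longrightarrow> 1 \<le> q k" using q2 by (metis le_trans one_le_numeral)
        show "0 < \<delta>" by (rule d0)
        show "\<delta> < 1" by (rule d1)
        show "\<And>F. F \<in> FF \<Longrightarrow> finite F \<and> F \<noteq> {} \<and> 0 \<notin> F"
        proof -
          fix F assume "F \<in> FF"
          then obtain A where A: "A \<in> \<A>" "F = fixed_coords n A" unfolding FF_def by blast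
          have "F \<subseteq> {1..n}" using A fc_sub by simp
          moreover have "F \<noteq> {}" using nc[OF A(1)] A(2) by auto
          ultimately show "finite F \<and> F \<noteq> {} \<and> 0 \<notin> F" using finite_subset by fastforce
        qed
        show "\<And>F i. F \<in> FF \<Longrightarrow> i \<in> F \<Longrightarrow> val F i \<in> {1..q i}"
        proof -
          fix F i assume F: "F \<in> FF" and i: "i \<in> F"
          then obtain A where A: "A \<in> \<A>" "F = fixed_coords n A" unfolding FF_def by blast
          have i1: "i \<in> {1..n}" and "\<exists>a. A i = {a}" using i A(2) unfolding fixed_coords_def by auto
          then obtain a where a: "A i = {a}" by blast
          have hyp: "is_hyperplane q n A" using H A(1) by blast
          have "A i = {1..q i} \<or> (\<exists>b\<in>{1..q i}. A i = {b})" using hyp i1 unfolding is_hyperplane_def by blast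
          then have "a \<in> {1..q i}" using a by auto
          then show "val F i \<in> {1..q i}" using valA[OF A(1) a] A(2) by simp
        qed
      qed
      have big: "\<forall>F\<in>FF. \<exists>i\<in>F. i > C"
      proof
        fix F assume "F \<in> FF"
        then obtain A where A: "A \<in> \<A>" "F = fixed_coords n A" unfolding FF_def by blast
        then obtain i where "i \<in> F" "i \<notin> {1..C}" using nc[OF A(1)] by blast
        moreover have "i \<ge> 1" using \<open>i \<in> F\<close> A(2) fc_sub by force
        ultimately show "\<exists>i\<in>F. i > C" by (intro bexI[of _ i]) auto
      qed
      have FFn: "\<forall>F\<in>FF. F \<subseteq> {1..n}" unfolding FF_def using fc_sub by blast
      have sm: "(\<Sum>j\<in>{C<..n}. (\<Prod>i\<in>{1..<j}. 1 + 3 * cv.\<rho> i) / (\<delta> * real (q j))^2) < 1"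
        using C[of n] unfolding cv.\<rho>_def .
      obtain y where y: "y \<in> grid q n" and yF: "\<forall>F\<in>FF. \<exists>i\<in>F. y i \<noteq> val F i"
        using cv.core[OF big FFn sm] by blast
      then obtain A where A: "A \<in> \<A>" "y \<in> hyp_set n A" using H by blast
      obtain i where i: "i \<in> fixed_coords n A" "y i \<noteq> val (fixed_coords n A) i"
        using yF A(1) unfolding FF_def by blast
      have i1: "i \<in> {1..n}" and "\<exists>a. A i = {a}" using i(1) unfolding fixed_coords_def by auto
      then obtain a where a: "A i = {a}" by blast
      have "y i \<in> A i" using A(2) i1 unfolding hyp_set_def by (auto simp: PiE_def Pi_def)
      then have "y i = a" using a by simp
      then show False using i(2) valA[OF A(1) a] by simp
    qed
  qed
qed

end
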